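(* For every $t>0$ and every $\theta\in\mathbb{R}$, \[ e^{-\theta^2/(2t)} = \frac{1}{\pi} \int_0^{\infty} e^{(\pi^2-\rho^2)/(2t)}\sinh(\rho)\sin\left(\frac{\pi\rho}{t}\right) \frac{d\rho}{\cosh(\rho) + \cosh(\theta)}, \] and \[ \theta e^{-\theta^2/(2t)} = \frac{t\sinh(\theta)}{\pi} \int_0^{\infty} e^{(\pi^2-\rho^2)/(2t)}\sinh(\rho)\sin\left(\frac{\pi\rho}{t}\right) \frac{d\rho}{[\cosh(\rho) + \cosh(\theta)]^2}. \] *)

theory Defs
  imports "HOL-Analysis.Analysis"
begin

end

theory Submission
  imports Defs "HOL-Complex_Analysis.Complex_Analysis" "HOL-Real_Asymp.Real_Asymp"
begin

lemma hci_linepath_horiz: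
  fixes f :: "complex \<Rightarrow> complex" and a b c :: real
  assumes "a < b"
  shows "(f has_contour_integral I) (linepath (Complex a c) (Complex b c)) \<longleftrightarrow>
         ((\<lambda>x. f (Complex x c)) has_integral I) {a..b}"
proof -
  have "(f has_contour_integral I) (linepath (Complex a c) (Complex b c)) \<longleftrightarrow>
        ((\<lambda>w. f (w + \<i> * of_real c)) has_contour_integral I) (linepath (of_real a) (of_real b))"
    unfolding has_contour_integral_linepath
    by (intro has_integral_cong arg_cong2[of _ _ _ _ "(*)"] arg_cong[of _ _ f])
       (auto simp: linepath_def complex_eq_iff algebra_simps)
  also have "\<dots> \<longleftrightarrow> ((\<lambda>x. f (Complex x c)) has_integral I) {a..b}"
    using assms by (subst has_contour_integral_linepath_Reals_iff) (auto simp: Complex_eq)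
  finally show ?thesis .
qed

lemma gauss_eval:
  fixes t x y :: real
  assumes "t > 0"
  shows "exp (- ((Complex x y)\<^sup>2) / (2 * of_real t)) = of_real (exp ((y\<^sup>2 - x\<^sup>2) / (2 * t))) * cis (- (x * y) / t)"
proof -
  have "- ((Complex x y)\<^sup>2) / (2 * of_real t) = of_real ((y\<^sup>2 - x\<^sup>2) / (2 * t)) + \<i> * of_real (- (x * y) / t)"
    using assms by (simp add: complex_eq_iff power2_eq_square field_simps Complex_eq)
  then have "exp (- ((Complex x y)\<^sup>2) / (2 * of_real t)) = exp (of_real ((y\<^sup>2 - x\<^sup>2) / (2 * t))) * exp (\<i> * of_real (- (x * y) / t))"
    by (simp only: exp_add)
  then show ?thesis by (simp only: exp_of_real cis_conv_exp)
qed

lemma rect_horizontal: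
  fixes \<psi> :: "complex \<Rightarrow> complex" and R B :: real and C :: complex
  assumes R: "R > 0"
    and cont: "continuous_on (path_image (rectpath (Complex (-R) (-pi)) (Complex R pi))) \<psi>"
    and hc: "(\<psi> has_contour_integral C) (rectpath (Complex (-R) (-pi)) (Complex R pi))"
    and bnd: "\<And>y. -pi \<le> y \<Longrightarrow> y \<le> pi \<Longrightarrow> norm (\<psi> (Complex R y)) \<le> B \<and> norm (\<psi> (Complex (-R) y)) \<le> B"
  shows "\<exists>V. norm V \<le> 4 * pi * B \<and>
           ((\<lambda>x. \<psi> (Complex x (-pi)) - \<psi> (Complex x pi)) has_integral (C - V)) {-R..R}"
proof -
  define a1 a2 a3 a4 where "a1 = Complex (-R) (-pi)" and "a2 = Complex R (-pi)"
    and "a3 = Complex R pi" and "a4 = Complex (-R) pi"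
  have rp: "rectpath a1 a3 = linepath a1 a2 +++ linepath a2 a3 +++ linepath a3 a4 +++ linepath a4 a1"
    by (simp add: rectpath_def a1_def a2_def a3_def a4_def Let_def)
  have pim: "path_image (rectpath a1 a3) = closed_segment a1 a2 \<union> closed_segment a2 a3 \<union> closed_segment a3 a4 \<union> closed_segment a4 a1"
    by (simp add: rp path_image_join Un_assoc)
  have cont': "continuous_on (path_image (rectpath a1 a3)) \<psi>"
    using cont by (simp add: a1_def a3_def)
  have "continuous_on (closed_segment a1 a2) \<psi>" "continuous_on (closed_segment a2 a3) \<psi>"
       "continuous_on (closed_segment a3 a4) \<psi>" "continuous_on (closed_segment a4 a1) \<psi>"
    using cont' unfolding pim by (auto intro: continuous_on_subset)
  then obtain I1 I2 I3 I4 where I1: "(\<psi> has_contour_integral I1) (linepath a1 a2)"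
      and I2: "(\<psi> has_contour_integral I2) (linepath a2 a3)"
      and I3: "(\<psi> has_contour_integral I3) (linepath a3 a4)"
      and I4: "(\<psi> has_contour_integral I4) (linepath a4 a1)"
    using contour_integrable_continuous_linepath unfolding contour_integrable_on_def by metis
  have "(\<psi> has_contour_integral (I1 + (I2 + (I3 + I4)))) (rectpath a1 a3)"
    unfolding rp
    by (intro has_contour_integral_join I1 I2 I3 I4 valid_path_join valid_path_linepath) auto
  moreover have "(\<psi> has_contour_integral C) (rectpath a1 a3)" using hc by (simp add: a1_def a3_def)
  ultimately have C: "C = I1 + I2 + I3 + I4"
    using has_contour_integral_unique by (metis add.assoc)
  have B0: "B \<ge> 0" using bnd[of 0] by (meson norm_ge_zero order_trans pi_ge_zero neg_le_0_iff_le)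
  have seg23: "closed_segment a2 a3 = {z. Re z = R \<and> Im z \<in> {-pi..pi}}"
    by (subst closed_segment_same_Re) (auto simp: a2_def a3_def closed_segment_eq_real_ivl)
  have seg41: "closed_segment a4 a1 = {z. Re z = -R \<and> Im z \<in> {-pi..pi}}"
    by (subst closed_segment_commute, subst closed_segment_same_Re) (auto simp: a4_def a1_def closed_segment_eq_real_ivl)
  have nI2: "norm I2 \<le> B * (2 * pi)"
  proof -
    have "norm I2 \<le> B * norm (a3 - a2)"
    proof (rule has_contour_integral_bound_linepath[OF I2 B0])
      fix z assume "z \<in> closed_segment a2 a3"
      then have "z = Complex R (Im z)" "-pi \<le> Im z" "Im z \<le> pi" unfolding seg23 by (auto simp: complex_eq_iff)
      then show "norm (\<psi> z) \<le> B" using bnd by metis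
    qed
    also have "a3 - a2 = complex_of_real (2 * pi) * \<i>" by (simp add: complex_eq_iff a2_def a3_def)
    also have "norm (complex_of_real (2 * pi) * \<i>) = 2 * pi" by (simp add: norm_mult)
    finally show ?thesis .
  qed
  have nI4: "norm I4 \<le> B * (2 * pi)"
  proof -
    have "norm I4 \<le> B * norm (a1 - a4)"
    proof (rule has_contour_integral_bound_linepath[OF I4 B0])
      fix z assume "z \<in> closed_segment a4 a1"
      then have "z = Complex (-R) (Im z)" "-pi \<le> Im z" "Im z \<le> pi" unfolding seg41 by (auto simp: complex_eq_iff)
      then show "norm (\<psi> z) \<le> B" using bnd by metis
    qed
    also have "a1 - a4 = complex_of_real (- 2 * pi) * \<i>" by (simp add: complex_eq_iff a1_def a4_def)
    also have "norm (complex_of_real (- 2 * pi) * \<i>) = 2 * pi" by (simp add: norm_mult)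
    finally show ?thesis .
  qed
  have bot: "((\<lambda>x. \<psi> (Complex x (-pi))) has_integral I1) {-R..R}"
    using I1 hci_linepath_horiz[of "-R" R \<psi> I1 "-pi"] R by (simp add: a1_def a2_def)
  have "(\<psi> has_contour_integral (-I3)) (linepath a4 a3)"
    using has_contour_integral_reverse_linepath[OF I3] .
  then have top: "((\<lambda>x. \<psi> (Complex x pi)) has_integral (-I3)) {-R..R}"
    using hci_linepath_horiz[of "-R" R \<psi> "-I3" "pi"] R by (simp add: a3_def a4_def)
  have "((\<lambda>x. \<psi> (Complex x (-pi)) - \<psi> (Complex x pi)) has_integral (C - (I2 + I4))) {-R..R}"
    using has_integral_diff[OF bot top] by (simp add: C algebra_simps)
  moreover have "norm (I2 + I4) \<le> 4 * pi * B"
  proof -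
    have "B * (2 * pi) + B * (2 * pi) = 4 * pi * B" by (simp add: algebra_simps)
    then show ?thesis using norm_triangle_ineq[of I2 I4] nI2 nI4 by linarith
  qed
  ultimately show ?thesis by blast
qed

lemma rect_residue:
  fixes f :: "complex \<Rightarrow> complex" and \<theta> R :: real
  assumes hol: "f holomorphic_on UNIV" and R: "R > \<bar>\<theta>\<bar>" and nz: "f (of_real \<theta>) \<noteq> 0"
  shows "((\<lambda>z. f z * (exp (z - of_real \<theta>) + 1) / (exp (z - of_real \<theta>) - 1))
           has_contour_integral (2 * pi * \<i> * (2 * f (of_real \<theta>)))) (rectpath (Complex (-R) (-pi)) (Complex R pi))"
proof -
  define S where "S = {z. Im z > -4} \<inter> {z. Im z < 4}"
  define \<psi> where "\<psi> = (\<lambda>z. f z * (exp (z - of_real \<theta>) + 1) / (exp (z - of_real \<theta>) - 1))"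
  define a1 a3 where "a1 = Complex (-R) (-pi)" and "a3 = Complex R pi"
  have pi4: "pi < 4" using pi_less_4 .
  have openS: "open S" unfolding S_def
    by (intro open_Int open_Collect_less continuous_intros)
  have connS: "connected S" unfolding S_def
    by (intro convex_connected convex_Int convex_halfspace_Im_gt convex_halfspace_Im_lt)
  have zeros: "z = of_real \<theta>" if "z \<in> S" "exp (z - of_real \<theta>) = 1" for z
  proof -
    from that(2) obtain n :: int where "Re (z - of_real \<theta>) = 0" "Im (z - of_real \<theta>) = of_int (2 * n) * pi"
      unfolding exp_eq_1 by blast
    moreover from that(1) have "\<bar>Im z\<bar> < 4" by (auto simp: S_def)
    ultimately have "\<bar>of_int (2 * n) * pi\<bar> < 4" by simp
    then have "\<bar>real_of_int (2 * n)\<bar> * pi < 4" by (simp add: abs_mult)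
    moreover have "\<bar>real_of_int (2 * n)\<bar> * 3 \<le> \<bar>real_of_int (2 * n)\<bar> * pi"
      using pi_gt3 by (intro mult_left_mono) auto
    ultimately have "real_of_int \<bar>2 * n\<bar> < 2" by simp
    then have "\<bar>2 * n\<bar> < 2" by linarith
    then have "n = 0" by linarith
    with \<open>Re (z - of_real \<theta>) = 0\<close> \<open>Im (z - of_real \<theta>) = of_int (2 * n) * pi\<close>
    show ?thesis by (simp add: complex_eq_iff)
  qed
  have ne: "exp (z - of_real \<theta>) - 1 \<noteq> 0" if "z \<in> S - {of_real \<theta>}" for z
    using zeros that by force
  have hol': "\<psi> holomorphic_on S - {of_real \<theta>}"
    unfolding \<psi>_def
    by (intro holomorphic_intros holomorphic_on_subset[OF hol] subset_UNIV ne)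
  have Rpos: "R > 0" using R by linarith
  have box: "of_real \<theta> \<in> box a1 a3"
    using R pi_gt_zero by (auto simp: a1_def a3_def in_box_complex_iff)
  have pim: "path_image (rectpath a1 a3) \<subseteq> S - {of_real \<theta>}"
  proof -
    have "path_image (rectpath a1 a3) = cbox a1 a3 - box a1 a3"
      using Rpos pi_gt_zero by (intro path_image_rectpath_cbox_minus_box) (auto simp: a1_def a3_def)
    moreover have "cbox a1 a3 \<subseteq> S"
      using pi4 by (auto simp: a1_def a3_def in_cbox_complex_iff S_def)
    ultimately show ?thesis using box by auto
  qed
  have wout: "\<forall>z. z \<notin> S \<longrightarrow> winding_number (rectpath a1 a3) z = 0"
  proof (intro allI impI)
    fix z assume "z \<notin> S"
    then have "z \<notin> cbox a1 a3" using pi4 by (auto simp: a1_def a3_def in_cbox_complex_iff S_def)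
    then show "winding_number (rectpath a1 a3) z = 0"
      using Rpos pi_gt_zero by (intro winding_number_rectpath_outside) (auto simp: a1_def a3_def)
  qed
  have ci0: "contour_integral (rectpath a1 a3) \<psi> =
          2 * pi * \<i> * (\<Sum>p\<in>{of_real \<theta>}. winding_number (rectpath a1 a3) p * residue \<psi> p)"
    by (rule Residue_theorem[OF openS connS _ hol' valid_path_rectpath _ pim wout]) auto
  have w: "winding_number (rectpath a1 a3) (of_real \<theta>) = 1"
    using box by (rule winding_number_rectpath)
  have r: "residue \<psi> (of_real \<theta>) = f (of_real \<theta>) * (exp (of_real \<theta> - of_real \<theta>) + 1) / 1"
    unfolding \<psi>_def
  proof (rule residue_simple_pole_deriv[where s = S])
    show "(\<lambda>w. f w * (exp (w - of_real \<theta>) + 1)) holomorphic_on S"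
      by (intro holomorphic_intros holomorphic_on_subset[OF hol]) auto
    show "(\<lambda>w. exp (w - of_real \<theta>) - 1) holomorphic_on S"
      by (intro holomorphic_intros)
    show "open S" using openS .
    show "connected S" using connS .
    show "of_real \<theta> \<in> S" using pi4 by (simp add: S_def)
    show "((\<lambda>w. exp (w - of_real \<theta>) - 1) has_field_derivative 1) (at (of_real \<theta>))"
      by (auto intro!: derivative_eq_intros)
  qed (use nz in auto)
  have ci: "contour_integral (rectpath a1 a3) \<psi> = 2 * pi * \<i> * (2 * f (of_real \<theta>))"
    by (simp add: ci0 w r)
  have "\<psi> contour_integrable_on (rectpath a1 a3)"
    using pim hol' by (intro contour_integrable_holomorphic_simple[where S = "S - {of_real \<theta>}"])
       (auto intro: openS open_Diff)
  then have "(\<psi> has_contour_integral contour_integral (rectpath a1 a3) \<psi>) (rectpath a1 a3)"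
    by (rule has_contour_integral_integral)
  then show ?thesis unfolding ci by (simp add: \<psi>_def a1_def a3_def)
qed

lemma exp_shift_eval:
  "exp (Complex x y - of_real \<theta>) = of_real (exp (x - \<theta>)) * cis y"
proof -
  have "Complex x y - of_real \<theta> = of_real (x - \<theta>) + \<i> * of_real y"
    by (simp add: complex_eq_iff)
  then have "exp (Complex x y - of_real \<theta>) = exp (of_real (x - \<theta>)) * exp (\<i> * of_real y)"
    by (simp only: exp_add)
  then show ?thesis by (simp only: exp_of_real cis_conv_exp)
qed

lemma exp_shift_pi:
  assumes "y = pi \<or> y = - pi"
  shows "exp (Complex x y - of_real \<theta>) = - of_real (exp (x - \<theta>))"
  using assms by (auto simp: exp_shift_eval complex_eq_iff)

lemma cis_diff_neg: "cis a - cis (- a) = 2 * \<i> * of_real (sin a)"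
  by (simp add: complex_eq_iff)

lemma diff1_eval:
  fixes t \<theta> x :: real
  assumes t: "t > 0"
  defines "\<psi> \<equiv> (\<lambda>z. exp (- (z\<^sup>2) / (2 * of_real t)) * ((exp (z - of_real \<theta>) + 1) / (exp (z - of_real \<theta>) - 1)))"
  shows "\<psi> (Complex x (-pi)) - \<psi> (Complex x pi) =
          (2 * \<i>) * of_real (exp ((pi\<^sup>2 - x\<^sup>2) / (2 * t)) * sin (pi * x / t) * ((exp (x - \<theta>) - 1) / (exp (x - \<theta>) + 1)))"
proof -
  define p where "p = exp (x - \<theta>)"
  have p: "p > 0" by (simp add: p_def)
  have em: "exp (Complex x (-pi) - of_real \<theta>) = - of_real p" by (simp add: exp_shift_pi p_def)
  have ep: "exp (Complex x pi - of_real \<theta>) = - of_real p" by (simp add: exp_shift_pi p_def)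
  have q: "(- of_real p + 1) / (- of_real p - 1) = (of_real ((p - 1) / (p + 1)) :: complex)"
  proof -
    have "(of_real p + 1 :: complex) \<noteq> 0"
      using p by (metis of_real_1 of_real_add of_real_eq_0_iff add_pos_pos zero_less_one order_less_irrefl)
    have "(- of_real p + 1) / (- of_real p - 1) = (- (of_real p - 1)) / (- (of_real p + 1) :: complex)"
      by (simp add: algebra_simps)
    also have "\<dots> = (of_real p - 1) / (of_real p + 1)" by (simp only: minus_divide_divide)
    also have "\<dots> = of_real ((p - 1) / (p + 1))" by simp
    finally show ?thesis .
  qed
  have "\<psi> (Complex x (-pi)) = of_real (exp ((pi\<^sup>2 - x\<^sup>2) / (2 * t))) * cis (pi * x / t) * of_real ((p - 1) / (p + 1))"
    unfolding \<psi>_def gauss_eval[OF t] em using q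
    by (simp add: mult_ac)
  moreover have "\<psi> (Complex x pi) = of_real (exp ((pi\<^sup>2 - x\<^sup>2) / (2 * t))) * cis (- (pi * x / t)) * of_real ((p - 1) / (p + 1))"
    unfolding \<psi>_def gauss_eval[OF t] ep using q
    by (simp add: mult_ac)
  ultimately have "\<psi> (Complex x (-pi)) - \<psi> (Complex x pi) =
      of_real (exp ((pi\<^sup>2 - x\<^sup>2) / (2 * t))) * (cis (pi * x / t) - cis (- (pi * x / t))) * of_real ((p - 1) / (p + 1))"
    by (simp add: algebra_simps)
  also have "\<dots> = (2 * \<i>) * of_real (exp ((pi\<^sup>2 - x\<^sup>2) / (2 * t)) * sin (pi * x / t) * ((p - 1) / (p + 1)))"
    unfolding cis_diff_neg by (simp add: mult_ac)
  finally show ?thesis by (simp add: p_def)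
qed

lemma diff2_eval:
  fixes t \<theta> x :: real
  assumes t: "t > 0"
  defines "\<psi> \<equiv> (\<lambda>z. exp (- (z\<^sup>2) / (2 * of_real t)) * (exp (z - of_real \<theta>) / (exp (z - of_real \<theta>) - 1)\<^sup>2))"
  shows "\<psi> (Complex x (-pi)) - \<psi> (Complex x pi) =
          (- 2 * \<i>) * of_real (exp ((pi\<^sup>2 - x\<^sup>2) / (2 * t)) * sin (pi * x / t) * (exp (x - \<theta>) / (exp (x - \<theta>) + 1)\<^sup>2))"
proof -
  define p where "p = exp (x - \<theta>)"
  have p: "p > 0" by (simp add: p_def)
  have em: "exp (Complex x (-pi) - of_real \<theta>) = - of_real p" by (simp add: exp_shift_pi p_def)
  have ep: "exp (Complex x pi - of_real \<theta>) = - of_real p" by (simp add: exp_shift_pi p_def)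
  have q: "(- of_real p) / (- of_real p - 1)\<^sup>2 = (- of_real (p / (p + 1)\<^sup>2) :: complex)"
  proof -
    have "(of_real p + 1 :: complex) \<noteq> 0"
      using p by (metis of_real_1 of_real_add of_real_eq_0_iff add_pos_pos zero_less_one order_less_irrefl)
    have "(- of_real p - 1)\<^sup>2 = (of_real p + 1 :: complex)\<^sup>2" by (simp add: power2_eq_square algebra_simps)
    then show ?thesis by simp
  qed
  have "\<psi> (Complex x (-pi)) = - (of_real (exp ((pi\<^sup>2 - x\<^sup>2) / (2 * t))) * cis (pi * x / t) * of_real (p / (p + 1)\<^sup>2))"
    unfolding \<psi>_def gauss_eval[OF t] em using q
    by (simp add: mult_ac)
  moreover have "\<psi> (Complex x pi) = - (of_real (exp ((pi\<^sup>2 - x\<^sup>2) / (2 * t))) * cis (- (pi * x / t)) * of_real (p / (p + 1)\<^sup>2))"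
    unfolding \<psi>_def gauss_eval[OF t] ep using q
    by (simp add: mult_ac)
  ultimately have "\<psi> (Complex x (-pi)) - \<psi> (Complex x pi) =
      - (of_real (exp ((pi\<^sup>2 - x\<^sup>2) / (2 * t))) * (cis (pi * x / t) - cis (- (pi * x / t))) * of_real (p / (p + 1)\<^sup>2))"
    by (simp add: algebra_simps)
  also have "\<dots> = (- 2 * \<i>) * of_real (exp ((pi\<^sup>2 - x\<^sup>2) / (2 * t)) * sin (pi * x / t) * (p / (p + 1)\<^sup>2))"
    unfolding cis_diff_neg by (simp add: mult_ac)
  finally show ?thesis by (simp add: p_def)
qed

lemma exp1_ge2: "exp (1::real) \<ge> 2"
  using exp_ge_add_one_self[of 1] by simp

lemma cth_bound:
  fixes u :: complex
  assumes "\<bar>Re u\<bar> \<ge> 1"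
  shows "norm ((exp u + 1) / (exp u - 1)) \<le> 3"
proof -
  define m where "m = exp (Re u)"
  have nm: "norm (exp u) = m" by (simp add: m_def)
  have up: "norm (exp u + 1) \<le> m + 1" using norm_triangle_ineq[of "exp u" 1] nm by simp
  have lo1: "norm (exp u - 1) \<ge> m - 1" using norm_triangle_ineq2[of "exp u" 1] nm by simp
  have lo2: "norm (exp u - 1) \<ge> 1 - m"
    using norm_triangle_ineq2[of 1 "exp u"] nm by (simp add: norm_minus_commute)
  show ?thesis
  proof (cases "Re u \<ge> 1")
    case True
    then have "m \<ge> exp 1" unfolding m_def by simp
    then have m2: "m \<ge> 2" using exp1_ge2 by linarith
    then have pos: "norm (exp u - 1) > 0" using lo1 by linarith
    have "norm (exp u + 1) \<le> 3 * norm (exp u - 1)" using up lo1 m2 by linarith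
    then show ?thesis using pos by (simp add: norm_divide divide_le_eq)
  next
    case False
    then have "Re u \<le> -1" using assms by linarith
    then have "m \<le> exp (-1)" unfolding m_def by simp
    also have "exp (-1) = inverse (exp (1::real))" by (simp add: exp_minus)
    also have "\<dots> \<le> 1/2" using le_imp_inverse_le[OF exp1_ge2] by simp
    finally have m2: "m \<le> 1/2" .
    then have pos: "norm (exp u - 1) > 0" using lo2 by linarith
    have "m \<ge> 0" by (simp add: m_def)
    have "norm (exp u + 1) \<le> 3 * norm (exp u - 1)" using up lo2 m2 by linarith
    then show ?thesis using pos by (simp add: norm_divide divide_le_eq)
  qed
qed

lemma dth_bound:
  fixes u :: complex
  assumes "\<bar>Re u\<bar> \<ge> 1"
  shows "norm (exp u / (exp u - 1)\<^sup>2) \<le> 4"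
proof -
  define m where "m = exp (Re u)"
  define d where "d = norm (exp u - 1)"
  have nm: "norm (exp u) = m" by (simp add: m_def)
  have lo1: "d \<ge> m - 1" using norm_triangle_ineq2[of "exp u" 1] nm by (simp add: d_def)
  have lo2: "d \<ge> 1 - m"
    using norm_triangle_ineq2[of 1 "exp u"] nm by (simp add: norm_minus_commute d_def)
  have key: "m \<le> 4 * d\<^sup>2 \<and> d > 0"
  proof (cases "Re u \<ge> 1")
    case True
    then have "m \<ge> exp 1" unfolding m_def by simp
    then have m2: "m \<ge> 2" using exp1_ge2 by linarith
    have "(m - 1) * 1 \<le> (m - 1) * (m - 1)" using m2 by (intro mult_left_mono) auto
    also have "\<dots> \<le> d * d" using lo1 m2 by (intro mult_mono) auto
    finally have "m - 1 \<le> d\<^sup>2" by (simp add: power2_eq_square)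
    then show ?thesis using m2 lo1 by auto
  next
    case False
    then have "Re u \<le> -1" using assms by linarith
    then have "m \<le> exp (-1)" unfolding m_def by simp
    also have "exp (-1) = inverse (exp (1::real))" by (simp add: exp_minus)
    also have "\<dots> \<le> 1/2" using le_imp_inverse_le[OF exp1_ge2] by simp
    finally have m2: "m \<le> 1/2" .
    have "(1/2) * (1/2) \<le> d * d" using lo2 m2 by (intro mult_mono) auto
    then have "1/4 \<le> d\<^sup>2" by (simp add: power2_eq_square)
    then show ?thesis using m2 lo2 by auto
  qed
  then show ?thesis by (simp add: norm_divide norm_power divide_le_eq d_def[symmetric] m_def)
qed

lemma gauss_norm_vert:
  fixes t X y R :: real
  assumes t: "t > 0" and "X = R \<or> X = -R" and "-pi \<le> y" "y \<le> pi"
  shows "norm (exp (- ((Complex X y)\<^sup>2) / (2 * of_real t))) \<le> exp ((pi\<^sup>2 - R\<^sup>2) / (2 * t))"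
proof -
  have "y\<^sup>2 \<le> pi\<^sup>2" using assms(3,4) pi_gt_zero by (subst power2_le_iff_abs_le) auto
  moreover have "X\<^sup>2 = R\<^sup>2" using assms(2) by auto
  ultimately have "(y\<^sup>2 - X\<^sup>2) / (2 * t) \<le> (pi\<^sup>2 - R\<^sup>2) / (2 * t)"
    using t by (intro divide_right_mono) auto
  then show ?thesis unfolding gauss_eval[OF t] by (simp add: norm_mult)
qed

lemma rect_avoid:
  fixes \<theta> R :: real
  assumes R: "R > \<bar>\<theta>\<bar>" and z: "z \<in> path_image (rectpath (Complex (-R) (-pi)) (Complex R pi))"
  shows "exp (z - of_real \<theta>) \<noteq> 1"
proof
  assume "exp (z - of_real \<theta>) = 1"
  then obtain n :: int where n: "Re (z - of_real \<theta>) = 0" "Im (z - of_real \<theta>) = of_int (2 * n) * pi"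
    unfolding exp_eq_1 by blast
  have pim: "path_image (rectpath (Complex (-R) (-pi)) (Complex R pi)) = cbox (Complex (-R) (-pi)) (Complex R pi) - box (Complex (-R) (-pi)) (Complex R pi)"
    using R pi_gt_zero by (intro path_image_rectpath_cbox_minus_box) auto
  from z have "\<bar>Im z\<bar> \<le> pi" unfolding pim by (auto simp: in_cbox_complex_iff)
  with n have "\<bar>real_of_int (2 * n)\<bar> * pi \<le> 1 * pi" by (simp add: abs_mult)
  then have "\<bar>real_of_int (2 * n)\<bar> \<le> 1" using pi_gt_zero mult_le_cancel_right by fastforce
  then have "real_of_int \<bar>2 * n\<bar> \<le> 1" by simp
  then have "\<bar>2 * n\<bar> \<le> 1" by linarith
  then have "n = 0" by linarith
  with n have "z = of_real \<theta>" by (simp add: complex_eq_iff)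
  moreover have "of_real \<theta> \<in> box (Complex (-R) (-pi)) (Complex R pi)"
    using R pi_gt_zero by (auto simp: in_box_complex_iff)
  ultimately show False using z unfolding pim by auto
qed

lemma deriv_D:
  fixes t \<theta> :: real and z :: complex
  assumes t: "t > 0" and e: "exp (z - of_real \<theta>) \<noteq> 1"
  shows "((\<lambda>z. exp (- (z\<^sup>2) / (2 * of_real t)) * ((exp (z - of_real \<theta>) + 1) / (exp (z - of_real \<theta>) - 1)))
          has_field_derivative
          (- (z / of_real t) * exp (- (z\<^sup>2) / (2 * of_real t)) * ((exp (z - of_real \<theta>) + 1) / (exp (z - of_real \<theta>) - 1))
           - 2 * (exp (- (z\<^sup>2) / (2 * of_real t)) * (exp (z - of_real \<theta>) / (exp (z - of_real \<theta>) - 1)\<^sup>2)))) (at z)"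
proof -
  have e': "exp (z - of_real \<theta>) - 1 \<noteq> 0" using e by simp
  have t': "(of_real t :: complex) \<noteq> 0" using t by simp
  have d1: "((\<lambda>z. exp (- (z\<^sup>2) / (2 * of_real t))) has_field_derivative
             (- (z / of_real t) * exp (- (z\<^sup>2) / (2 * of_real t)))) (at z)"
    using t' by (auto intro!: derivative_eq_intros simp: field_simps power2_eq_square)
  have dn: "((\<lambda>z. exp (z - of_real \<theta>) + 1) has_field_derivative exp (z - of_real \<theta>)) (at z)"
    by (auto intro!: derivative_eq_intros)
  have dd: "((\<lambda>z. exp (z - of_real \<theta>) - 1) has_field_derivative exp (z - of_real \<theta>)) (at z)"
    by (auto intro!: derivative_eq_intros)
  note d2 = DERIV_divide[OF dn dd e']
  note d3 = DERIV_mult[OF d1 d2]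
  show ?thesis
    by (rule DERIV_cong[OF d3]) (use e' in \<open>simp add: field_simps power2_eq_square\<close>)
qed

lemma aux_lin: "((z::complex) + c) * G * X / D - c * (G * X / D) = z * G * (X / D)"
  by (cases "D = 0") (simp_all add: field_simps)

lemma rect_second:
  fixes t \<theta> R :: real
  assumes t: "t > 0" and R: "R > \<bar>\<theta>\<bar>"
  shows "((\<lambda>z. exp (- (z\<^sup>2) / (2 * of_real t)) * (exp (z - of_real \<theta>) / (exp (z - of_real \<theta>) - 1)\<^sup>2))
           has_contour_integral (- (2 * pi * \<i> * of_real \<theta> / of_real t) * exp (- ((of_real \<theta>)\<^sup>2) / (2 * of_real t))))
         (rectpath (Complex (-R) (-pi)) (Complex R pi))"
proof -
  define G where "G = (\<lambda>z::complex. exp (- (z\<^sup>2) / (2 * of_real t)))"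
  define A where "A = (\<lambda>z::complex. (exp (z - of_real \<theta>) + 1) / (exp (z - of_real \<theta>) - 1))"
  define Q where "Q = (\<lambda>z::complex. exp (z - of_real \<theta>) / (exp (z - of_real \<theta>) - 1)\<^sup>2)"
  define c where "c = \<bar>\<theta>\<bar> + 1"
  define g where "g = rectpath (Complex (-R) (-pi)) (Complex R pi)"
  have t': "(of_real t :: complex) \<noteq> 0" using t by simp
  have hG: "G holomorphic_on UNIV" unfolding G_def using t' by (intro holomorphic_intros) auto
  have "(of_real \<theta> + of_real c :: complex) = of_real (\<theta> + c)" by simp
  moreover have "\<theta> + c > 0" unfolding c_def by linarith
  ultimately have nz1: "(of_real \<theta> + of_real c :: complex) \<noteq> 0" by (metis of_real_eq_0_iff less_irrefl)
  have r1: "((\<lambda>z. (z + of_real c) * G z * (exp (z - of_real \<theta>) + 1) / (exp (z - of_real \<theta>) - 1))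
             has_contour_integral (2 * pi * \<i> * (2 * ((of_real \<theta> + of_real c) * G (of_real \<theta>))))) g"
    unfolding g_def using nz1
    by (intro rect_residue[OF _ R]) (auto intro!: holomorphic_intros hG simp: G_def)
  have r0: "((\<lambda>z. G z * (exp (z - of_real \<theta>) + 1) / (exp (z - of_real \<theta>) - 1))
             has_contour_integral (2 * pi * \<i> * (2 * G (of_real \<theta>)))) g"
    unfolding g_def
    by (intro rect_residue[OF _ R]) (auto intro!: holomorphic_intros hG simp: G_def)
  have "((\<lambda>z. (z + of_real c) * G z * (exp (z - of_real \<theta>) + 1) / (exp (z - of_real \<theta>) - 1)
            - of_real c * (G z * (exp (z - of_real \<theta>) + 1) / (exp (z - of_real \<theta>) - 1)))
         has_contour_integral (2 * pi * \<i> * (2 * ((of_real \<theta> + of_real c) * G (of_real \<theta>))) - of_real c * (2 * pi * \<i> * (2 * G (of_real \<theta>))))) g"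
    by (intro has_contour_integral_diff r1 has_contour_integral_lmul r0)
  moreover have "\<And>z. (z + of_real c) * G z * (exp (z - of_real \<theta>) + 1) / (exp (z - of_real \<theta>) - 1)
            - of_real c * (G z * (exp (z - of_real \<theta>) + 1) / (exp (z - of_real \<theta>) - 1)) = z * G z * A z"
    unfolding A_def by (rule aux_lin)
  moreover have "2 * pi * \<i> * (2 * ((of_real \<theta> + of_real c) * G (of_real \<theta>))) - of_real c * (2 * pi * \<i> * (2 * G (of_real \<theta>)))
        = 2 * pi * \<i> * (2 * (of_real \<theta> * G (of_real \<theta>)))"
    by (simp add: algebra_simps)
  ultimately have r: "((\<lambda>z. z * G z * A z) has_contour_integral (2 * pi * \<i> * (2 * (of_real \<theta> * G (of_real \<theta>))))) g"
    by simp
  define S where "S = {z::complex. exp (z - of_real \<theta>) \<noteq> 1}"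
  have prim: "((\<lambda>z. - (z / of_real t) * G z * A z - 2 * (G z * Q z)) has_contour_integral 0) g"
  proof (rule Cauchy_theorem_primitive[where S = S and f = "\<lambda>z. G z * A z"])
    fix x assume "x \<in> S"
    then have "exp (x - of_real \<theta>) \<noteq> 1" by (simp add: S_def)
    from deriv_D[OF t this] show "((\<lambda>z. G z * A z) has_field_derivative - (x / of_real t) * G x * A x - 2 * (G x * Q x)) (at x within S)"
      unfolding G_def A_def Q_def by (rule has_field_derivative_at_within)
  next
    show "valid_path g" by (simp add: g_def)
    show "path_image g \<subseteq> S" unfolding S_def g_def using rect_avoid[OF R] by blast
    show "pathfinish g = pathstart g" by (simp add: g_def)
  qed
  have hc: "((\<lambda>z. (-1/2) * (- (z / of_real t) * G z * A z - 2 * (G z * Q z)) + (- (1 / (2 * of_real t))) * (z * G z * A z))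
        has_contour_integral ((-1/2) * 0 + (- (1 / (2 * of_real t))) * (2 * pi * \<i> * (2 * (of_real \<theta> * G (of_real \<theta>)))))) g"
    by (intro has_contour_integral_add has_contour_integral_lmul prim r)
  have F: "(\<lambda>z. (-1/2) * (- (z / of_real t) * G z * A z - 2 * (G z * Q z)) + (- (1 / (2 * of_real t))) * (z * G z * A z)) = (\<lambda>z. G z * Q z)"
    using t' by (intro ext) (simp add: field_simps)
  have V: "(-1/2) * 0 + (- (1 / (2 * of_real t))) * (2 * pi * \<i> * (2 * (of_real \<theta> * G (of_real \<theta>))))
      = - (2 * pi * \<i> * of_real \<theta> / of_real t) * G (of_real \<theta>)"
    using t' by (simp add: field_simps)
  from hc have "((\<lambda>z. G z * Q z) has_contour_integral (- (2 * pi * \<i> * of_real \<theta> / of_real t) * G (of_real \<theta>))) g"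
    by (simp only: F V)
  then show ?thesis unfolding G_def Q_def g_def .
qed

lemma id1:
  fixes x \<theta> :: real
  shows "(exp (x - \<theta>) - 1) / (exp (x - \<theta>) + 1) - (exp (- x - \<theta>) - 1) / (exp (- x - \<theta>) + 1)
         = 2 * sinh x / (cosh x + cosh \<theta>)"
proof -
  define P where "P = exp x"
  define Q where "Q = exp \<theta>"
  have P: "P > 0" and Q: "Q > 0" by (simp_all add: P_def Q_def)
  have PQ3: "P * Q > 0" using P Q by simp
  have PQ0: "P + Q > 0" "1 + P * Q > 0" "P * Q > 0" using P Q PQ3 by linarith+
  have PQ: "P + Q > 0" "1 + P * Q > 0" "P * Q > 0" "Q + P > 0" "1 + Q * P > 0" using PQ0 by (metis add.commute mult.commute)+
  have x1: "exp (x - \<theta>) = P / Q" by (simp add: P_def Q_def exp_diff)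
  have x2: "exp (- x - \<theta>) = 1 / (P * Q)" by (simp add: P_def Q_def exp_diff exp_minus field_simps)
  have s: "sinh x = (P - 1 / P) / 2" by (simp add: P_def sinh_def exp_minus field_simps)
  have c1: "cosh x = (P + 1 / P) / 2" by (simp add: P_def cosh_def exp_minus field_simps)
  have c2: "cosh \<theta> = (Q + 1 / Q) / 2" by (simp add: Q_def cosh_def exp_minus field_simps)
  have b1: "P / Q + 1 \<noteq> 0" using P Q by (smt (verit) divide_pos_pos)
  have e1: "(P / Q - 1) / (P / Q + 1) = (P - Q) / (P + Q)"
    using P Q PQ b1 by (subst frac_eq_eq) (simp_all add: field_simps)
  have b2: "1 / (P * Q) + 1 \<noteq> 0" using PQ by (smt (verit) divide_pos_pos)
  have b2': "1 + P * Q \<noteq> 0" using PQ by simp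
  have e2: "(1 / (P * Q) - 1) / (1 / (P * Q) + 1) = (1 - P * Q) / (1 + P * Q)"
    using P Q by (subst frac_eq_eq[OF b2 b2']) (simp add: field_simps)
  have b5: "(P + 1 / P) / 2 + (Q + 1 / Q) / 2 \<noteq> 0" using P Q by (smt (verit) divide_pos_pos)
  have b6: "(P + Q) * (1 + P * Q) \<noteq> 0" using PQ by simp
  have e3: "2 * ((P - 1 / P) / 2) / ((P + 1 / P) / 2 + (Q + 1 / Q) / 2) = 2 * Q * (P * P - 1) / ((P + Q) * (1 + P * Q))"
    using P Q by (subst frac_eq_eq[OF b5 b6]) (simp add: field_simps algebra_simps)
  have "(P - Q) / (P + Q) - (1 - P * Q) / (1 + P * Q) = 2 * Q * (P * P - 1) / ((P + Q) * (1 + P * Q))"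
    using PQ by (simp add: divide_simps) (simp add: algebra_simps)
  then show ?thesis unfolding x1 x2 s c1 c2 e1 e2 e3 .
qed
lemma id2:
  fixes x \<theta> :: real
  shows "exp (x - \<theta>) / (exp (x - \<theta>) + 1)\<^sup>2 - exp (- x - \<theta>) / (exp (- x - \<theta>) + 1)\<^sup>2
         = sinh \<theta> * sinh x / (cosh x + cosh \<theta>)\<^sup>2"
proof -
  define P where "P = exp x"
  define Q where "Q = exp \<theta>"
  have P: "P > 0" and Q: "Q > 0" by (simp_all add: P_def Q_def)
  have PQ3: "P * Q > 0" using P Q by simp
  have PQ0: "P + Q > 0" "1 + P * Q > 0" "P * Q > 0" using P Q PQ3 by linarith+
  have PQ: "P + Q > 0" "1 + P * Q > 0" "P * Q > 0" "Q + P > 0" "1 + Q * P > 0" using PQ0 by (metis add.commute mult.commute)+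
  have x1: "exp (x - \<theta>) = P / Q" by (simp add: P_def Q_def exp_diff)
  have x2: "exp (- x - \<theta>) = 1 / (P * Q)" by (simp add: P_def Q_def exp_diff exp_minus field_simps)
  have s: "sinh x = (P - 1 / P) / 2" by (simp add: P_def sinh_def exp_minus field_simps)
  have s2: "sinh \<theta> = (Q - 1 / Q) / 2" by (simp add: Q_def sinh_def exp_minus field_simps)
  have c1: "cosh x = (P + 1 / P) / 2" by (simp add: P_def cosh_def exp_minus field_simps)
  have c2: "cosh \<theta> = (Q + 1 / Q) / 2" by (simp add: Q_def cosh_def exp_minus field_simps)
  have e1: "P / Q / (P / Q + 1)\<^sup>2 = P * Q / (P + Q)\<^sup>2"
    using P Q PQ by (simp add: field_simps power2_eq_square)
  have e2: "1 / (P * Q) / (1 / (P * Q) + 1)\<^sup>2 = P * Q / (1 + P * Q)\<^sup>2"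
    using P Q PQ by (simp add: field_simps power2_eq_square)
  have b3: "((P + 1 / P) / 2 + (Q + 1 / Q) / 2)\<^sup>2 \<noteq> 0" using P Q by (smt (verit) divide_pos_pos power_not_zero)
  have b4: "((P + Q) * (1 + P * Q))\<^sup>2 \<noteq> 0" using PQ by simp
  have e3: "(Q - 1 / Q) / 2 * ((P - 1 / P) / 2) / ((P + 1 / P) / 2 + (Q + 1 / Q) / 2)\<^sup>2 = P * Q * (P * P - 1) * (Q * Q - 1) / ((P + Q) * (1 + P * Q))\<^sup>2"
    using P Q by (subst frac_eq_eq[OF b3 b4]) (simp add: field_simps power2_eq_square algebra_simps)
  have "P * Q / (P + Q)\<^sup>2 - P * Q / (1 + P * Q)\<^sup>2 = P * Q * (P * P - 1) * (Q * Q - 1) / ((P + Q) * (1 + P * Q))\<^sup>2"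
    using PQ by (simp add: divide_simps) (simp add: algebra_simps power2_eq_square)
  then show ?thesis unfolding x1 x2 s s2 c1 c2 e1 e2 e3 .
qed

lemma has_integral_extract:
  fixes f :: "real \<Rightarrow> real" and c J :: complex
  assumes h: "((\<lambda>x. c * of_real (f x)) has_integral J) S" and c: "c \<noteq> 0"
  shows "(f has_integral Re (J / c)) S"
proof -
  have "((\<lambda>x. of_real (f x) :: complex) has_integral J / c) S"
    using h c by (simp add: has_integral_mult_right_iff)
  from has_integral_linear[OF this bounded_linear_Re] show ?thesis by (simp add: o_def)
qed

lemma has_integral_symm:
  fixes a :: "real \<Rightarrow> real"
  assumes h: "(a has_integral J) {-R..R}" and R: "R \<ge> 0"
  shows "((\<lambda>x. a x + a (-x)) has_integral J) {0..R}"
proof -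
  have ia: "a integrable_on {-R..R}" using h by blast
  have i1: "a integrable_on {-R..0}" using R by (intro integrable_subinterval_real[OF ia]) auto
  have i2: "a integrable_on {0..R}" using R by (intro integrable_subinterval_real[OF ia]) auto
  have J: "integral {-R..0} a + integral {0..R} a = J"
  proof -
    have "(a has_integral (integral {-R..0} a + integral {0..R} a)) {-R..R}"
      using R by (intro has_integral_combine[where c=0] has_integral_integral[THEN iffD1] i1 i2) auto
    then show ?thesis using h has_integral_unique by blast
  qed
  have r: "((\<lambda>x. a (-x)) has_integral integral {-R..0} a) {0..R}"
    using has_integral_reflect_real[where a="-R" and b=0 and f=a and i="integral {-R..0} a"] i1 by (simp add: has_integral_integral)
  have "((\<lambda>x. a x + a (-x)) has_integral (integral {0..R} a + integral {-R..0} a)) {0..R}"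
    by (intro has_integral_add r) (use i2 in \<open>simp add: has_integral_integral\<close>)
  then show ?thesis using J by (simp add: add.commute)
qed

lemma improper_integrable:
  fixes h :: "real \<Rightarrow> real"
  assumes cont: "continuous_on {0..} h" and bnd: "\<And>x. x \<ge> 0 \<Longrightarrow> \<bar>h x\<bar> \<le> K * exp (- x)"
  shows "h integrable_on {0..}"
proof -
  have "((\<lambda>x. K * exp (- x)) has_integral K) {0..}"
    using has_integral_mult_right[OF has_integral_exp_minus_to_infinity[of 1 0], of K] by simp
  then have gi: "(\<lambda>x. K * exp (- x)) integrable_on {0..}" by blast
  have S: "{0::real..} \<in> sets lebesgue" by simp
  have nb: "norm (h x) \<le> K * exp (- x)" if "x \<in> {0..}" for x
    using bnd[of x] that by simp
  show ?thesis
    by (rule measurable_bounded_by_integrable_imp_integrable[OF continuous_imp_measurable_on_sets_lebesgue[OF cont S] gi nb S])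
qed

lemma improper_limit:
  fixes h :: "real \<Rightarrow> real"
  assumes cont: "continuous_on {0..} h" and bnd: "\<And>x. x \<ge> 0 \<Longrightarrow> \<bar>h x\<bar> \<le> K * exp (- x)"
    and lim: "((\<lambda>R. integral {0..R} h) \<longlongrightarrow> L) at_top"
  shows "(h has_integral L) {0..}"
proof -
  define g where "g = (\<lambda>x::real. K * exp (- x))"
  have K: "K \<ge> 0" using bnd[of 0] by simp
  have gI: "(g has_integral K) {0..}"
    using has_integral_mult_right[OF has_integral_exp_minus_to_infinity[of 1 0], of K]
    by (simp add: g_def)
  have gint: "g integrable_on {0..y}" for y unfolding g_def
    by (intro integrable_continuous_interval continuous_intros)
  have hint: "h integrable_on {0..y}" for y
    by (intro integrable_continuous_interval continuous_on_subset[OF cont]) auto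
  have gv: "integral {0..y} g = K - K * exp (- y)" if "y \<ge> 0" for y
  proof -
    have "(g has_integral ((- K * exp (- y)) - (- K * exp (- 0)))) {0..y}"
      unfolding g_def using that
      by (intro fundamental_theorem_of_calculus)
         (auto intro!: derivative_eq_intros simp flip: has_real_derivative_iff_has_vector_derivative)
    then show ?thesis by (simp add: integral_unique)
  qed
  have glim: "((\<lambda>y. integral {0..y} g) \<longlongrightarrow> K) at_top"
  proof -
    have "((\<lambda>y::real. K - K * exp (- y)) \<longlongrightarrow> K) at_top" by real_asymp
    moreover have "\<forall>\<^sub>F y in at_top. K - K * exp (- y) = integral {0..y} g"
      using eventually_ge_at_top[of "0::real"] by eventually_elim (simp add: gv)
    ultimately show ?thesis by (rule Lim_transform_eventually)
  qed
  have "((\<lambda>x. h x + g x) has_integral (L + K)) {0..}"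
  proof (rule has_integral_to_inf)
    show "(\<lambda>x. h x + g x) integrable_on {0..y}" for y by (intro integrable_add hint gint)
    have ev: "\<forall>\<^sub>F y in at_top. integral {0..y} h + integral {0..y} g = integral {0..y} (\<lambda>x. h x + g x)"
      by (intro always_eventually allI integral_add[symmetric] hint gint)
    have "((\<lambda>y. integral {0..y} h + integral {0..y} g) \<longlongrightarrow> L + K) at_top"
      by (intro tendsto_add lim glim)
    from this ev show "((\<lambda>y. integral {0..y} (\<lambda>x. h x + g x)) \<longlongrightarrow> L + K) at_top"
      by (rule Lim_transform_eventually)
    show "h y + g y \<ge> 0" if "y \<ge> 0" for y using bnd[OF that] by (simp add: g_def)
  qed
  from has_integral_diff[OF this gI] show ?thesis by simp
qed

lemma E_bound:
  fixes t x :: real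
  assumes t: "t > 0"
  shows "exp ((pi\<^sup>2 - x\<^sup>2) / (2 * t)) \<le> exp (pi\<^sup>2 / (2 * t) + t / 2) * exp (- x)"
proof -
  have sq: "(x - t)\<^sup>2 = x\<^sup>2 - 2 * t * x + t\<^sup>2" by (simp add: power2_eq_square algebra_simps)
  have "0 \<le> (x - t)\<^sup>2" by simp
  then have "2 * t * x - t\<^sup>2 \<le> x\<^sup>2" using sq by linarith
  then have "(pi\<^sup>2 - x\<^sup>2) \<le> (pi\<^sup>2 / (2 * t) + t / 2 - x) * (2 * t)"
    using t by (simp add: algebra_simps power2_eq_square)
  then have "(pi\<^sup>2 - x\<^sup>2) / (2 * t) \<le> pi\<^sup>2 / (2 * t) + t / 2 - x"
    using t by (simp add: divide_le_eq)
  then show ?thesis by (simp add: exp_add[symmetric])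
qed

lemma h1_bound:
  fixes E x y \<theta> :: real
  assumes "E \<ge> 0"
  shows "\<bar>E * sinh x * sin y / (cosh x + cosh \<theta>)\<bar> \<le> E"
proof -
  have c: "cosh x + cosh \<theta> > 0" by (simp add: add_pos_pos)
  have "\<bar>sinh x\<bar> \<le> cosh x" using sinh_le_cosh_real[of x] sinh_le_cosh_real[of "-x"] by (simp add: abs_le_iff)
  moreover have "\<bar>sin y\<bar> \<le> 1" by (rule abs_sin_le_one)
  ultimately have "\<bar>sinh x * sin y\<bar> \<le> cosh x + cosh \<theta>"
  proof -
    have "\<bar>sinh x\<bar> * \<bar>sin y\<bar> \<le> \<bar>sinh x\<bar> * 1" by (intro mult_left_mono) (auto simp: abs_sin_le_one)
    then show ?thesis using \<open>\<bar>sinh x\<bar> \<le> cosh x\<close> cosh_real_pos[of \<theta>] unfolding abs_mult by linarith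
  qed
  then have "\<bar>sinh x * sin y / (cosh x + cosh \<theta>)\<bar> \<le> 1" using c by (simp add: abs_divide divide_le_eq)
  then have "E * \<bar>sinh x * sin y / (cosh x + cosh \<theta>)\<bar> \<le> E * 1" using assms by (intro mult_left_mono) auto
  then show ?thesis using assms by (simp add: abs_mult mult.assoc)
qed

lemma h2_bound:
  fixes E x y \<theta> :: real
  assumes "E \<ge> 0"
  shows "\<bar>E * sinh x * sin y / (cosh x + cosh \<theta>)\<^sup>2\<bar> \<le> E"
proof -
  have c: "cosh x + cosh \<theta> \<ge> 1" using cosh_real_ge_1[of x] cosh_real_ge_1[of \<theta>] by linarith
  have c2: "cosh x + cosh \<theta> \<le> (cosh x + cosh \<theta>)\<^sup>2" using c by (simp add: power2_eq_square)
  have "\<bar>sinh x\<bar> \<le> cosh x" using sinh_le_cosh_real[of x] sinh_le_cosh_real[of "-x"] by (simp add: abs_le_iff)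
  moreover have "\<bar>sin y\<bar> \<le> 1" by (rule abs_sin_le_one)
  ultimately have "\<bar>sinh x * sin y\<bar> \<le> cosh x + cosh \<theta>"
  proof -
    have "\<bar>sinh x\<bar> * \<bar>sin y\<bar> \<le> \<bar>sinh x\<bar> * 1" by (intro mult_left_mono) (auto simp: abs_sin_le_one)
    then show ?thesis using \<open>\<bar>sinh x\<bar> \<le> cosh x\<close> cosh_real_pos[of \<theta>] unfolding abs_mult by linarith
  qed
  then have "\<bar>sinh x * sin y\<bar> \<le> (cosh x + cosh \<theta>)\<^sup>2" using c2 by linarith
  moreover have "(cosh x + cosh \<theta>)\<^sup>2 > 0" using c by simp
  ultimately have "\<bar>sinh x * sin y / (cosh x + cosh \<theta>)\<^sup>2\<bar> \<le> 1" by (simp add: abs_divide divide_le_eq)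
  then have "E * \<bar>sinh x * sin y / (cosh x + cosh \<theta>)\<^sup>2\<bar> \<le> E * 1" using assms by (intro mult_left_mono) auto
  then show ?thesis using assms by (simp add: abs_mult mult.assoc)
qed

lemma lim_exp_neg: "((\<lambda>R::real. exp (- R)) \<longlongrightarrow> 0) at_top"
  using filterlim_compose[OF exp_at_bot filterlim_uminus_at_bot_at_top] by (simp add: o_def)

lemma est1:
  fixes t \<theta> R :: real
  assumes t: "t > 0" and R: "R \<ge> \<bar>\<theta>\<bar> + 1"
  shows "\<bar>integral {0..R} (\<lambda>\<rho>. exp ((pi\<^sup>2 - \<rho>\<^sup>2) / (2 * t)) * sinh \<rho> * sin (pi * \<rho> / t) / (cosh \<rho> + cosh \<theta>))
           - pi * exp (- (\<theta>\<^sup>2) / (2 * t))\<bar> \<le> 3 * pi * exp ((pi\<^sup>2 - R\<^sup>2) / (2 * t))"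
proof -
  define \<psi> where "\<psi> = (\<lambda>z::complex. exp (- (z\<^sup>2) / (2 * of_real t)) * ((exp (z - of_real \<theta>) + 1) / (exp (z - of_real \<theta>) - 1)))"
  define a where "a = (\<lambda>x. exp ((pi\<^sup>2 - x\<^sup>2) / (2 * t)) * sin (pi * x / t) * ((exp (x - \<theta>) - 1) / (exp (x - \<theta>) + 1)))"
  define h where "h = (\<lambda>\<rho>. exp ((pi\<^sup>2 - \<rho>\<^sup>2) / (2 * t)) * sinh \<rho> * sin (pi * \<rho> / t) / (cosh \<rho> + cosh \<theta>))"
  define e where "e = exp (- (\<theta>\<^sup>2) / (2 * t))"
  define B where "B = 3 * exp ((pi\<^sup>2 - R\<^sup>2) / (2 * t))"
  have R0: "R > \<bar>\<theta>\<bar>" "R > 0" using R by linarith+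
  have t': "(of_real t :: complex) \<noteq> 0" using t by simp
  have Ge: "exp (- ((of_real \<theta>)\<^sup>2) / (2 * of_real t)) = (of_real e :: complex)"
  proof -
    have "- ((of_real \<theta>)\<^sup>2) / (2 * of_real t) = (of_real (- (\<theta>\<^sup>2) / (2 * t)) :: complex)" by simp
    then show ?thesis by (simp only: e_def exp_of_real)
  qed
  have "((\<lambda>z. exp (- (z\<^sup>2) / (2 * of_real t)) * (exp (z - of_real \<theta>) + 1) / (exp (z - of_real \<theta>) - 1))
          has_contour_integral (2 * pi * \<i> * (2 * exp (- ((of_real \<theta>)\<^sup>2) / (2 * of_real t)))))
          (rectpath (Complex (-R) (-pi)) (Complex R pi))"
    using t' by (intro rect_residue[OF _ R0(1)]) (auto intro!: holomorphic_intros)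
  from this[unfolded Ge] have hc: "(\<psi> has_contour_integral (2 * pi * \<i> * (2 * of_real e))) (rectpath (Complex (-R) (-pi)) (Complex R pi))"
    unfolding \<psi>_def times_divide_eq_right .
  have cont: "continuous_on (path_image (rectpath (Complex (-R) (-pi)) (Complex R pi))) \<psi>"
    unfolding \<psi>_def using rect_avoid[OF R0(1)] t' by (intro continuous_intros) auto
  have vb: "norm (\<psi> (Complex X y)) \<le> B" if "X = R \<or> X = -R" "-pi \<le> y" "y \<le> pi" for X y
  proof -
    have "\<bar>Re (Complex X y - of_real \<theta>)\<bar> \<ge> 1" using that R by auto
    then have c3: "norm ((exp (Complex X y - of_real \<theta>) + 1) / (exp (Complex X y - of_real \<theta>) - 1)) \<le> 3" by (rule cth_bound)
    have g: "norm (exp (- ((Complex X y)\<^sup>2) / (2 * of_real t))) \<le> exp ((pi\<^sup>2 - R\<^sup>2) / (2 * t))"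
      by (rule gauss_norm_vert[OF t that])
    have "norm (exp (- ((Complex X y)\<^sup>2) / (2 * of_real t))) * norm ((exp (Complex X y - of_real \<theta>) + 1) / (exp (Complex X y - of_real \<theta>) - 1))
          \<le> exp ((pi\<^sup>2 - R\<^sup>2) / (2 * t)) * 3"
      by (rule mult_mono[OF g c3]) auto
    then show ?thesis unfolding \<psi>_def B_def norm_mult by linarith
  qed
  have bnd: "\<And>y. -pi \<le> y \<Longrightarrow> y \<le> pi \<Longrightarrow> norm (\<psi> (Complex R y)) \<le> B \<and> norm (\<psi> (Complex (-R) y)) \<le> B"
    using vb by blast
  obtain V where V: "norm V \<le> 4 * pi * B"
    and hi: "((\<lambda>x. \<psi> (Complex x (-pi)) - \<psi> (Complex x pi)) has_integral (2 * pi * \<i> * (2 * of_real e) - V)) {-R..R}"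
    using rect_horizontal[OF R0(2) cont hc bnd] by blast
  have fe: "(\<lambda>x. \<psi> (Complex x (-pi)) - \<psi> (Complex x pi)) = (\<lambda>x. (2 * \<i>) * of_real (a x))"
    unfolding \<psi>_def a_def by (intro ext diff1_eval[OF t])
  have ha: "(a has_integral Re ((2 * pi * \<i> * (2 * of_real e) - V) / (2 * \<i>))) {-R..R}"
    by (rule has_integral_extract) (use hi fe in auto)
  have hs: "((\<lambda>x. a x + a (-x)) has_integral Re ((2 * pi * \<i> * (2 * of_real e) - V) / (2 * \<i>))) {0..R}"
    using has_integral_symm[OF ha] R0 by simp
  have ae: "a x + a (-x) = 2 * h x" for x
  proof -
    have sm: "sin (pi * (- x) / t) = - sin (pi * x / t)" by simp
    have "a x + a (-x) = exp ((pi\<^sup>2 - x\<^sup>2) / (2 * t)) * sin (pi * x / t) *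
           ((exp (x - \<theta>) - 1) / (exp (x - \<theta>) + 1) - (exp (- x - \<theta>) - 1) / (exp (- x - \<theta>) + 1))"
      unfolding a_def sm by (simp add: algebra_simps)
    also have "\<dots> = 2 * h x" unfolding id1 h_def by (simp add: mult_ac)
    finally show ?thesis .
  qed
  have "((\<lambda>x. 2 * h x) has_integral Re ((2 * pi * \<i> * (2 * of_real e) - V) / (2 * \<i>))) {0..R}"
    using hs unfolding ae .
  then have "(h has_integral Re ((2 * pi * \<i> * (2 * of_real e) - V) / (2 * \<i>)) / 2) {0..R}"
    by (simp add: has_integral_mult_right_iff)
  then have I: "integral {0..R} h = Re ((2 * pi * \<i> * (2 * of_real e) - V) / (2 * \<i>)) / 2"
    by (rule integral_unique)
  have "(2 * pi * \<i> * (2 * of_real e) - V) / (2 * \<i>) = of_real (2 * pi * e) - V / (2 * \<i>)"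
  proof -
    have "2 * pi * \<i> * (2 * of_real e) / (2 * \<i>) = (of_real (2 * pi * e) :: complex)"
      by (simp add: field_simps)
    then show ?thesis by (simp only: diff_divide_distrib)
  qed
  then have I2: "integral {0..R} h = pi * e - Re (V / (2 * \<i>)) / 2" using I by simp
  have "\<bar>Re (V / (2 * \<i>))\<bar> \<le> norm (V / (2 * \<i>))" by (rule abs_Re_le_cmod)
  also have "\<dots> = norm V / 2" by (simp add: norm_divide norm_mult)
  finally have "\<bar>Re (V / (2 * \<i>))\<bar> \<le> 2 * pi * B" using V by linarith
  then have "\<bar>integral {0..R} h - pi * e\<bar> \<le> pi * B" unfolding I2 by simp
  then show ?thesis unfolding h_def e_def B_def by simp
qed

lemma est2:
  fixes t \<theta> R :: real
  assumes t: "t > 0" and R: "R \<ge> \<bar>\<theta>\<bar> + 1"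
  shows "\<bar>integral {0..R} (\<lambda>\<rho>. sinh \<theta> * (exp ((pi\<^sup>2 - \<rho>\<^sup>2) / (2 * t)) * sinh \<rho> * sin (pi * \<rho> / t) / (cosh \<rho> + cosh \<theta>)\<^sup>2))
           - pi * \<theta> / t * exp (- (\<theta>\<^sup>2) / (2 * t))\<bar> \<le> 8 * pi * exp ((pi\<^sup>2 - R\<^sup>2) / (2 * t))"
proof -
  define \<psi> where "\<psi> = (\<lambda>z::complex. exp (- (z\<^sup>2) / (2 * of_real t)) * (exp (z - of_real \<theta>) / (exp (z - of_real \<theta>) - 1)\<^sup>2))"
  define a where "a = (\<lambda>x. exp ((pi\<^sup>2 - x\<^sup>2) / (2 * t)) * sin (pi * x / t) * (exp (x - \<theta>) / (exp (x - \<theta>) + 1)\<^sup>2))"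
  define h where "h = (\<lambda>\<rho>. sinh \<theta> * (exp ((pi\<^sup>2 - \<rho>\<^sup>2) / (2 * t)) * sinh \<rho> * sin (pi * \<rho> / t) / (cosh \<rho> + cosh \<theta>)\<^sup>2))"
  define e where "e = exp (- (\<theta>\<^sup>2) / (2 * t))"
  define B where "B = 4 * exp ((pi\<^sup>2 - R\<^sup>2) / (2 * t))"
  define C where "C = - (2 * pi * \<i> * of_real \<theta> / of_real t) * (of_real e :: complex)"
  have R0: "R > \<bar>\<theta>\<bar>" "R > 0" using R by linarith+
  have t': "(of_real t :: complex) \<noteq> 0" using t by simp
  have Ge: "exp (- ((of_real \<theta>)\<^sup>2) / (2 * of_real t)) = (of_real e :: complex)"
  proof -
    have "- ((of_real \<theta>)\<^sup>2) / (2 * of_real t) = (of_real (- (\<theta>\<^sup>2) / (2 * t)) :: complex)" by simp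
    then show ?thesis by (simp only: e_def exp_of_real)
  qed
  have hc: "(\<psi> has_contour_integral C) (rectpath (Complex (-R) (-pi)) (Complex R pi))"
    using rect_second[OF t R0(1)] unfolding Ge C_def \<psi>_def .
  have cont: "continuous_on (path_image (rectpath (Complex (-R) (-pi)) (Complex R pi))) \<psi>"
    unfolding \<psi>_def using rect_avoid[OF R0(1)] t' by (intro continuous_intros) auto
  have vb: "norm (\<psi> (Complex X y)) \<le> B" if "X = R \<or> X = -R" "-pi \<le> y" "y \<le> pi" for X y
  proof -
    have "\<bar>Re (Complex X y - of_real \<theta>)\<bar> \<ge> 1" using that R by auto
    then have c3: "norm (exp (Complex X y - of_real \<theta>) / (exp (Complex X y - of_real \<theta>) - 1)\<^sup>2) \<le> 4" by (rule dth_bound)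
    have g: "norm (exp (- ((Complex X y)\<^sup>2) / (2 * of_real t))) \<le> exp ((pi\<^sup>2 - R\<^sup>2) / (2 * t))"
      by (rule gauss_norm_vert[OF t that])
    have "norm (exp (- ((Complex X y)\<^sup>2) / (2 * of_real t))) * norm (exp (Complex X y - of_real \<theta>) / (exp (Complex X y - of_real \<theta>) - 1)\<^sup>2)
          \<le> exp ((pi\<^sup>2 - R\<^sup>2) / (2 * t)) * 4"
      by (rule mult_mono[OF g c3]) auto
    then show ?thesis unfolding \<psi>_def B_def norm_mult by linarith
  qed
  have bnd: "\<And>y. -pi \<le> y \<Longrightarrow> y \<le> pi \<Longrightarrow> norm (\<psi> (Complex R y)) \<le> B \<and> norm (\<psi> (Complex (-R) y)) \<le> B"
    using vb by blast
  obtain V where V: "norm V \<le> 4 * pi * B"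
    and hi: "((\<lambda>x. \<psi> (Complex x (-pi)) - \<psi> (Complex x pi)) has_integral (C - V)) {-R..R}"
    using rect_horizontal[OF R0(2) cont hc bnd] by blast
  have fe: "(\<lambda>x. \<psi> (Complex x (-pi)) - \<psi> (Complex x pi)) = (\<lambda>x. (- 2 * \<i>) * of_real (a x))"
    unfolding \<psi>_def a_def by (intro ext diff2_eval[OF t])
  have ha: "(a has_integral Re ((C - V) / (- 2 * \<i>))) {-R..R}"
    by (rule has_integral_extract) (use hi fe in auto)
  have hs: "((\<lambda>x. a x + a (-x)) has_integral Re ((C - V) / (- 2 * \<i>))) {0..R}"
    using has_integral_symm[OF ha] R0 by simp
  have ae: "a x + a (-x) = h x" for x
  proof -
    have sm: "sin (pi * (- x) / t) = - sin (pi * x / t)" by simp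
    have "a x + a (-x) = exp ((pi\<^sup>2 - x\<^sup>2) / (2 * t)) * sin (pi * x / t) *
           (exp (x - \<theta>) / (exp (x - \<theta>) + 1)\<^sup>2 - exp (- x - \<theta>) / (exp (- x - \<theta>) + 1)\<^sup>2)"
      unfolding a_def sm by (simp add: algebra_simps)
    also have "\<dots> = h x" unfolding id2 h_def by (simp add: mult_ac)
    finally show ?thesis .
  qed
  have "(h has_integral Re ((C - V) / (- 2 * \<i>))) {0..R}"
    using hs unfolding ae .
  then have I: "integral {0..R} h = Re ((C - V) / (- 2 * \<i>))"
    by (rule integral_unique)
  have "(C - V) / (- 2 * \<i>) = of_real (pi * \<theta> / t * e) + V / (2 * \<i>)"
  proof -
    have A: "(- (2 * pi * \<i> * of_real \<theta> / of_real t) * (of_real e :: complex)) / (- 2 * \<i>) = of_real (pi * \<theta> / t * e)"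
      using t' by (simp add: field_simps)
    have B: "V / (- 2 * \<i>) = - (V / (2 * \<i>))" by (simp add: field_simps)
    show ?thesis unfolding C_def by (simp only: diff_divide_distrib A B diff_minus_eq_add)
  qed
  then have I2: "integral {0..R} h = pi * \<theta> / t * e + Re (V / (2 * \<i>))"
    unfolding I by (simp only: plus_complex.sel Re_complex_of_real)
  have "\<bar>Re (V / (2 * \<i>))\<bar> \<le> norm (V / (2 * \<i>))" by (rule abs_Re_le_cmod)
  also have "\<dots> = norm V / 2" by (simp add: norm_divide norm_mult)
  finally have "\<bar>Re (V / (2 * \<i>))\<bar> \<le> 2 * pi * B" using V by linarith
  then have "\<bar>integral {0..R} h - pi * \<theta> / t * e\<bar> \<le> 2 * pi * B" unfolding I2 by simp
  then show ?thesis unfolding h_def e_def B_def by simp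
qed


theorem mainTheorem1:
  fixes t \<theta> :: real
  assumes "t > 0"
  shows "((\<lambda>\<rho>. exp ((pi\<^sup>2 - \<rho>\<^sup>2) / (2 * t)) * sinh \<rho> * sin (pi * \<rho> / t)
              / (cosh \<rho> + cosh \<theta>))
           has_integral (pi * exp (- (\<theta>\<^sup>2) / (2 * t)))) {0..}
       \<and> (\<exists>I. ((\<lambda>\<rho>. exp ((pi\<^sup>2 - \<rho>\<^sup>2) / (2 * t)) * sinh \<rho> * sin (pi * \<rho> / t)
              / (cosh \<rho> + cosh \<theta>)\<^sup>2) has_integral I) {0..}
            \<and> \<theta> * exp (- (\<theta>\<^sup>2) / (2 * t)) = t * sinh \<theta> / pi * I)"
proof -
  have t: "t > 0" using assms .
  define h1 where "h1 = (\<lambda>\<rho>. exp ((pi\<^sup>2 - \<rho>\<^sup>2) / (2 * t)) * sinh \<rho> * sin (pi * \<rho> / t) / (cosh \<rho> + cosh \<theta>))"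
  define h2 where "h2 = (\<lambda>\<rho>. exp ((pi\<^sup>2 - \<rho>\<^sup>2) / (2 * t)) * sinh \<rho> * sin (pi * \<rho> / t) / (cosh \<rho> + cosh \<theta>)\<^sup>2)"
  define K where "K = exp (pi\<^sup>2 / (2 * t) + t / 2)"
  define e where "e = exp (- (\<theta>\<^sup>2) / (2 * t))"
  have t0: "t \<noteq> 0" using t by simp
  have cne: "cosh x + cosh \<theta> \<noteq> 0" for x
    using cosh_real_pos[of x] cosh_real_pos[of \<theta>] by linarith
  have b1: "\<bar>h1 x\<bar> \<le> K * exp (- x)" for x
    using h1_bound[of "exp ((pi\<^sup>2 - x\<^sup>2) / (2 * t))" x "pi * x / t" \<theta>] E_bound[OF t, of x]
    unfolding h1_def K_def by simp
  have b2: "\<bar>h2 x\<bar> \<le> K * exp (- x)" for x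
    using h2_bound[of "exp ((pi\<^sup>2 - x\<^sup>2) / (2 * t))" x "pi * x / t" \<theta>] E_bound[OF t, of x]
    unfolding h2_def K_def by simp
  have c1: "continuous_on {0..} h1"
    unfolding h1_def using t0 cne by (intro continuous_intros) auto
  have c2: "continuous_on {0..} h2"
    unfolding h2_def using t0 cne by (intro continuous_intros) auto
  have g0: "((\<lambda>R. exp ((pi\<^sup>2 - R\<^sup>2) / (2 * t))) \<longlongrightarrow> 0) at_top"
  proof (rule Lim_null_comparison)
    show "\<forall>\<^sub>F R in at_top. norm (exp ((pi\<^sup>2 - R\<^sup>2) / (2 * t))) \<le> K * exp (- R)"
      using E_bound[OF t] by (simp add: K_def)
    show "((\<lambda>R. K * exp (- R)) \<longlongrightarrow> 0) at_top"
      using tendsto_mult[OF tendsto_const[of K] lim_exp_neg] by simp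
  qed
  have lim1: "((\<lambda>R. integral {0..R} h1) \<longlongrightarrow> pi * e) at_top"
  proof (rule LIM_zero_cancel, rule Lim_null_comparison)
    show "\<forall>\<^sub>F R in at_top. norm (integral {0..R} h1 - pi * e) \<le> 3 * pi * exp ((pi\<^sup>2 - R\<^sup>2) / (2 * t))"
      using eventually_ge_at_top[of "\<bar>\<theta>\<bar> + 1"]
      by eventually_elim (use est1[OF t] in \<open>simp add: h1_def e_def\<close>)
    show "((\<lambda>R. 3 * pi * exp ((pi\<^sup>2 - R\<^sup>2) / (2 * t))) \<longlongrightarrow> 0) at_top"
      using tendsto_mult[OF tendsto_const[of "3 * pi"] g0] by simp
  qed
  have part1: "(h1 has_integral (pi * e)) {0..}"
    using improper_limit[OF c1 _ lim1] b1 by blast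
  have part2: "\<exists>I. (h2 has_integral I) {0..} \<and> \<theta> * e = t * sinh \<theta> / pi * I"
  proof (cases "\<theta> = 0")
    case True
    have "h2 integrable_on {0..}" using improper_integrable[OF c2] b2 by blast
    then have "(h2 has_integral integral {0..} h2) {0..}" by (simp add: has_integral_integral)
    then show ?thesis using True by auto
  next
    case False
    then have s0: "sinh \<theta> \<noteq> 0" by simp
    define h3 where "h3 = (\<lambda>x. sinh \<theta> * h2 x)"
    have c3: "continuous_on {0..} h3" unfolding h3_def by (intro continuous_intros c2)
    have b3: "\<bar>h3 x\<bar> \<le> (\<bar>sinh \<theta>\<bar> * K) * exp (- x)" for x
      unfolding h3_def abs_mult mult.assoc by (intro mult_left_mono b2) auto
    have lim3: "((\<lambda>R. integral {0..R} h3) \<longlongrightarrow> pi * \<theta> / t * e) at_top"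
    proof (rule LIM_zero_cancel, rule Lim_null_comparison)
      show "\<forall>\<^sub>F R in at_top. norm (integral {0..R} h3 - pi * \<theta> / t * e) \<le> 8 * pi * exp ((pi\<^sup>2 - R\<^sup>2) / (2 * t))"
        using eventually_ge_at_top[of "\<bar>\<theta>\<bar> + 1"]
        by eventually_elim (use est2[OF t] in \<open>simp add: h3_def h2_def e_def\<close>)
      show "((\<lambda>R. 8 * pi * exp ((pi\<^sup>2 - R\<^sup>2) / (2 * t))) \<longlongrightarrow> 0) at_top"
        using tendsto_mult[OF tendsto_const[of "8 * pi"] g0] by simp
    qed
    have "(h3 has_integral (pi * \<theta> / t * e)) {0..}"
      using improper_limit[OF c3 _ lim3] b3 by blast
    then have h2i: "(h2 has_integral (pi * \<theta> / t * e) / sinh \<theta>) {0..}"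
      unfolding h3_def using s0 by (simp add: has_integral_mult_right_iff)
    have "\<theta> * e = t * sinh \<theta> / pi * ((pi * \<theta> / t * e) / sinh \<theta>)"
      using s0 t0 pi_gt_zero by (simp add: field_simps)
    then show ?thesis using h2i by blast
  qed
  show ?thesis using part1 part2 unfolding h1_def h2_def e_def by blast
qed

end
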